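(* Let $\varepsilon\in(0,1)$, a block partition $1=\kappa_1<\dots<\kappa_{J+1}=N+1$ and $j\in\{1,\dots,J\}$. Assume $\varphi_j<1$ and $\varphi_j^2T_j\ge24\log\varepsilon^{-5}$. Then for every $k\in B_j$, $${\bf P}_{\vartheta,f}\Big(\hat h^{JS}_k\in\Big[h^*_k-\frac{2(1-h^*_k)\varphi_j}{1-\varphi_j},\ h^*_k\Big]\Big)\ge1-2\varepsilon^5.$$
   Context: Model: $\vartheta\in\mathbb R$, $f$ locally square integrable, even, $1$-periodic, $f_k=\sqrt2\int_{-1/2}^{1/2}\cos(2\pi kt)f(t)dt$. Observations $x_k=f_k\cos(2\pi k\vartheta)+\varepsilon\xi_k$, $x_k^*=f_k\sin(2\pi k\vartheta)+\varepsilon\xi_k^*$, $\xi_k,\xi_k^*$ i.i.d. $\mathcal N(0,1)$, law ${\bf P}_{\vartheta,f}$. Blocks $B_j=\{\kappa_j,\dots,\kappa_{j+1}-1\}$, $T_j=\kappa_{j+1}-\kappa_j$, $\sigma_j^2=\sum_{k\in B_j}(2\pi k)^2$, $\|f'\|^2_{(j)}=\sum_{k\in B_j}(2\pi k)^2f_k^2$. Oracle: $h^*_k=\|f'\|^2_{(j)}/(\|f'\|^2_{(j)}+\varepsilon^2\sigma_j^2)$ for $k\in B_j$. Penalized Stein filter with penalty $\varphi_j>0$: $\hat h^{JS}_k=\Big(1-\frac{\varepsilon^2\sigma_j^2(1+\varphi_j)}{(\|y'\|^2_{(j)}-2\varepsilon^2\sigma_j^2)_++\varepsilon^2\sigma_j^2}\Big)_+$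 for $k\in B_j$, where $\|y'\|^2_{(j)}=\sum_{k\in B_j}(2\pi k)^2(x_k^2+{x_k^*}^2)$. *)

theory Defs
  imports "HOL-Probability.Probability"
begin

definition fcoef :: "(real \<Rightarrow> real) \<Rightarrow> nat \<Rightarrow> real" where
  "fcoef f k = sqrt 2 * (LBINT t=-(1/2)..1/2. cos (2 * pi * real k * t) * f t)"

definition block :: "(nat \<Rightarrow> nat) \<Rightarrow> nat \<Rightarrow> nat set" where
  "block \<kappa> j = {\<kappa> j ..< \<kappa> (Suc j)}"

definition blen :: "(nat \<Rightarrow> nat) \<Rightarrow> nat \<Rightarrow> nat" where
  "blen \<kappa> j = \<kappa> (Suc j) - \<kappa> j"

definition sigma2 :: "(nat \<Rightarrow> nat) \<Rightarrow> nat \<Rightarrow> real" where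
  "sigma2 \<kappa> j = (\<Sum>k\<in>block \<kappa> j. (2 * pi * real k)^2)"

definition dnorm2 :: "(nat \<Rightarrow> real) \<Rightarrow> (nat \<Rightarrow> nat) \<Rightarrow> nat \<Rightarrow> real" where
  "dnorm2 F \<kappa> j = (\<Sum>k\<in>block \<kappa> j. (2 * pi * real k)^2 * (F k)^2)"

definition oracle_h :: "(nat \<Rightarrow> real) \<Rightarrow> real \<Rightarrow> (nat \<Rightarrow> nat) \<Rightarrow> nat \<Rightarrow> real" where
  "oracle_h F \<epsilon> \<kappa> j = dnorm2 F \<kappa> j / (dnorm2 F \<kappa> j + \<epsilon>^2 * sigma2 \<kappa> j)"

(* the noise space: i.i.d. N(0,1) variables indexed by (k, True) for xi_k and (k, False) for xi*_k *)
definition noise :: "(nat \<times> bool \<Rightarrow> real) measure" where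
  "noise = (\<Pi>\<^sub>M i\<in>UNIV. density lborel std_normal_density)"

definition obs_x :: "(nat \<Rightarrow> real) \<Rightarrow> real \<Rightarrow> real \<Rightarrow> (nat \<times> bool \<Rightarrow> real) \<Rightarrow> nat \<Rightarrow> real" where
  "obs_x F \<theta> \<epsilon> \<omega> k = F k * cos (2 * pi * real k * \<theta>) + \<epsilon> * \<omega> (k, True)"

definition obs_xs :: "(nat \<Rightarrow> real) \<Rightarrow> real \<Rightarrow> real \<Rightarrow> (nat \<times> bool \<Rightarrow> real) \<Rightarrow> nat \<Rightarrow> real" where
  "obs_xs F \<theta> \<epsilon> \<omega> k = F k * sin (2 * pi * real k * \<theta>) + \<epsilon> * \<omega> (k, False)"

definition ynorm2 :: "(nat \<Rightarrow> real) \<Rightarrow> (nat \<Rightarrow> real) \<Rightarrow> (nat \<Rightarrow> nat) \<Rightarrow> nat \<Rightarrow> real" where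
  "ynorm2 x xs \<kappa> j = (\<Sum>k\<in>block \<kappa> j. (2 * pi * real k)^2 * ((x k)^2 + (xs k)^2))"

definition stein :: "real \<Rightarrow> real \<Rightarrow> (nat \<Rightarrow> nat) \<Rightarrow> nat \<Rightarrow> (nat \<Rightarrow> real) \<Rightarrow> (nat \<Rightarrow> real) \<Rightarrow> real" where
  "stein \<epsilon> \<phi> \<kappa> j x xs =
     max 0 (1 - \<epsilon>^2 * sigma2 \<kappa> j * (1 + \<phi>) /
       (max 0 (ynorm2 x xs \<kappa> j - 2 * \<epsilon>^2 * sigma2 \<kappa> j) + \<epsilon>^2 * sigma2 \<kappa> j))"

end

theory Submission
  imports Defs
begin

lemma ln_lower1:
  fixes x :: real assumes x0: "0 \<le> x" and x1: "x < 1/2"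
  shows "-2*x - 2*x^2 - (8/3)*x^3/(1-2*x) \<le> ln (1-2*x)"
proof -
  define g where "g y = ln (1-2*y) + 2*y + 2*y^2 + (8/3)*y^3/(1-2*y)" for y :: real
  have "g 0 \<le> g x"
  proof (rule deriv_nonneg_imp_mono[where g=g and a=0 and b=x and g'="\<lambda>y. (16/3)*y^3/(1-2*y)^2"])
    fix y assume y: "y \<in> {0..x}"
    then have y1: "1 - 2*y > 0" using x1 by auto
    then have y2: "1 - 2*y \<noteq> 0" by simp
    have sq: "(1-2*y)^2 > 0" using y2 by simp
    have p1: "0 < 9 + y*(y*36) - y*36" "0 < 3 + y*(y*12) - y*12"
      using sq by (simp_all add: power2_eq_square algebra_simps)
    show "(g has_real_derivative (16/3)*y^3/(1-2*y)^2) (at y)"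
      unfolding g_def[abs_def] using y1
      apply (auto intro!: derivative_eq_intros)
      using p1 apply (simp add: divide_simps)
      apply (simp add: algebra_simps power2_eq_square power3_eq_cube)
      done
    show "0 \<le> (16/3)*y^3/(1-2*y)^2" using y by auto
  qed (use x0 in auto)
  then show ?thesis unfolding g_def by simp
qed

lemma ln_lower2:
  fixes x :: real assumes x0: "0 \<le> x"
  shows "2*x - 2*x^2 \<le> ln (1+2*x)"
proof -
  define g where "g y = ln (1+2*y) - 2*y + 2*y^2" for y :: real
  have "g 0 \<le> g x"
  proof (rule deriv_nonneg_imp_mono[where g=g and a=0 and b=x and g'="\<lambda>y. 8*y^2/(1+2*y)"])
    fix y assume y: "y \<in> {0..x}"
    then have y1: "1 + 2*y > 0" by auto
    then have y2: "1 + 2*y \<noteq> 0" by simp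
    show "(g has_real_derivative 8*y^2/(1+2*y)) (at y)"
      unfolding g_def[abs_def] using y1
      apply (auto intro!: derivative_eq_intros)
      apply (simp add: divide_simps)
      apply (simp add: algebra_simps power2_eq_square)
      done
    show "0 \<le> 8*y^2/(1+2*y)" using y by auto
  qed (use x0 in auto)
  then show ?thesis unfolding g_def by simp
qed

abbreviation "NN \<equiv> density lborel std_normal_density"

lemma prob_NN: "prob_space NN"
  by (rule prob_space_normal_density) simp

lemma noise_prod_integral:
  fixes W :: "(nat \<times> bool) set" and g :: "nat \<times> bool \<Rightarrow> real \<Rightarrow> ennreal"
  assumes W: "finite W" and g: "\<And>i. i \<in> W \<Longrightarrow> g i \<in> borel_measurable borel"
  shows "(\<integral>\<^sup>+\<omega>. (\<Prod>i\<in>W. g i (\<omega> i)) \<partial>noise) = (\<Prod>i\<in>W. \<integral>\<^sup>+x. g i x \<partial>NN)"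
proof -
  interpret P: product_prob_space "\<lambda>_. NN" UNIV
    by (intro product_prob_space.intro product_sigma_finite.intro product_prob_space_axioms.intro)
       (auto simp: prob_NN prob_space_imp_sigma_finite)
  have gm: "g i \<in> borel_measurable NN" if "i \<in> W" for i
    using g[OF that] by simp
  have m1: "(\<lambda>\<omega>. restrict \<omega> W) \<in> measurable (PiM UNIV (\<lambda>_. NN)) (PiM W (\<lambda>_. NN))"
    by (rule measurable_restrict_subset) auto
  have m2: "(\<lambda>y. \<Prod>i\<in>W. g i (y i)) \<in> borel_measurable (PiM W (\<lambda>_. NN))"
    using gm by (intro borel_measurable_prod_ennreal) (auto intro: measurable_compose[OF measurable_component_singleton])
  have "(\<integral>\<^sup>+\<omega>. (\<Prod>i\<in>W. g i (\<omega> i)) \<partial>noise) = (\<integral>\<^sup>+\<omega>. (\<lambda>y. \<Prod>i\<in>W. g i (y i)) (restrict \<omega> W) \<partial>PiM UNIV (\<lambda>_. NN))"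
    unfolding noise_def by (intro nn_integral_cong prod.cong) auto
  also have "\<dots> = (\<integral>\<^sup>+y. (\<Prod>i\<in>W. g i (y i)) \<partial>distr (PiM UNIV (\<lambda>_. NN)) (PiM W (\<lambda>_. NN)) (\<lambda>\<omega>. restrict \<omega> W))"
    by (rule nn_integral_distr[symmetric, OF m1]) (use m2 in simp)
  also have "\<dots> = (\<integral>\<^sup>+y. (\<Prod>i\<in>W. g i (y i)) \<partial>PiM W (\<lambda>_. NN))"
    by (subst P.distr_PiM_restrict_finite) (use W in auto)
  also have "\<dots> = (\<Prod>i\<in>W. \<integral>\<^sup>+x. g i x \<partial>NN)"
    by (rule P.product_nn_integral_prod[OF W gm])
  finally show ?thesis .
qed

lemma gauss_mgf:
  fixes t m e :: real assumes a: "0 < 1 - 2*t*e^2"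
  shows "(\<integral>\<^sup>+x. ennreal (exp (t*(m+e*x)^2)) \<partial>NN) = ennreal (exp (t*m^2/(1-2*t*e^2)) / sqrt (1-2*t*e^2))"
proof -
  define a where "a = 1-2*t*e^2"
  define \<sigma> where "\<sigma> = 1 / sqrt a"
  define \<mu> where "\<mu> = 2*t*e*m/a"
  define C where "C = exp (t*m^2/a) / sqrt a"
  have a0: "0 < a" using a a_def by simp
  have C0: "0 \<le> C" unfolding C_def using a0 by simp
  have pw: "std_normal_density x * exp (t*(m+e*x)^2) = C * normal_density \<mu> \<sigma> x" for x
  proof -
    have s2: "\<sigma>^2 = 1/a" unfolding \<sigma>_def using a0 by (simp add: power_divide)
    have xm: "x - \<mu> = (a*x - 2*t*e*m)/a" using a0 unfolding \<mu>_def by (simp add: diff_divide_distrib)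
    have q1: "(a/2)*(x-\<mu>)^2 = (a*x - 2*t*e*m)^2/(2*a)"
      unfolding xm using a0 by (simp add: power_divide power2_eq_square)
    have e2: "2*t*m^2 - (a*x - 2*t*e*m)^2 = 2*a*(- (x^2)/2 + t*(m+e*x)^2)"
      unfolding a_def by (simp add: algebra_simps power2_eq_square)
    have q2: "t*m^2/a - (a*x - 2*t*e*m)^2/(2*a) = (2*t*m^2 - (a*x - 2*t*e*m)^2)/(2*a)"
      using a0 by (simp add: diff_divide_distrib)
    have ex: "- (x^2)/2 + t*(m+e*x)^2 = t*m^2/a - (a/2)*(x-\<mu>)^2"
      unfolding q1 q2 e2 using a0 by simp
    have n1: "sqrt (2*pi*\<sigma>^2) = sqrt (2*pi) / sqrt a"
      unfolding s2 by (simp add: real_sqrt_divide)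
    have n2: "- ((x-\<mu>)^2)/(2*\<sigma>^2) = - (a/2)*(x-\<mu>)^2"
      unfolding s2 using a0 by simp
    have nd: "normal_density \<mu> \<sigma> x = sqrt a / sqrt (2*pi) * exp (- (a/2)*(x-\<mu>)^2)"
      unfolding normal_density_def n1 n2 by simp
    have "C * normal_density \<mu> \<sigma> x = 1 / sqrt (2*pi) * (exp (t*m^2/a) * exp (- (a/2)*(x-\<mu>)^2))"
    proof -
      have gen: "(A/q)*(q/r*E) = 1/r*(A*E)" if "q \<noteq> 0" for A q r E :: real
        using that by simp
      show ?thesis unfolding C_def nd
        by (rule gen) (use a0 in simp)
    qed
    also have "\<dots> = 1 / sqrt (2*pi) * exp (- (x^2)/2 + t*(m+e*x)^2)"
      unfolding ex exp_diff by (simp add: exp_minus field_simps)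
    also have "\<dots> = std_normal_density x * exp (t*(m+e*x)^2)"
      unfolding std_normal_density_def by (simp add: mult_exp_exp)
    finally show ?thesis by simp
  qed
  have "(\<integral>\<^sup>+x. ennreal (exp (t*(m+e*x)^2)) \<partial>NN) = (\<integral>\<^sup>+x. ennreal (std_normal_density x) * ennreal (exp (t*(m+e*x)^2)) \<partial>lborel)"
    by (rule nn_integral_density) auto
  also have "\<dots> = (\<integral>\<^sup>+x. ennreal C * ennreal (normal_density \<mu> \<sigma> x) \<partial>lborel)"
    by (intro nn_integral_cong) (simp add: ennreal_mult[symmetric] pw C0)
  also have "\<dots> = ennreal C * (\<integral>\<^sup>+x. ennreal (normal_density \<mu> \<sigma> x) \<partial>lborel)"
    by (rule nn_integral_cmult) auto
  also have "(\<integral>\<^sup>+x. ennreal (normal_density \<mu> \<sigma> x) \<partial>lborel) = 1"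
  proof -
    have sp: "0 < \<sigma>" unfolding \<sigma>_def using a0 by simp
    show ?thesis
      using integrable_normal_density[OF sp] integral_normal_density[OF sp]
      by (subst nn_integral_eq_integral) simp_all
  qed
  finally show ?thesis unfolding C_def a_def by simp
qed

lemma sum_sq_closed:
  fixes a T :: nat
  shows "6*(\<Sum>k\<in>{a..<a+T}. (real k)^2) = 6*real T*(real a - 1)^2 + 6*(real a - 1)*real T*(real T+1) + real T*(real T+1)*(2*real T+1)"
proof (induction T)
  case 0 then show ?case by simp
next
  case (Suc T)
  have "{a..<a+Suc T} = insert (a+T) {a..<a+T}" by auto
  then have "6*(\<Sum>k\<in>{a..<a+Suc T}. (real k)^2) = 6*(real a + real T)^2 + 6*(\<Sum>k\<in>{a..<a+T}. (real k)^2)" by simp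
  also have "\<dots> = 6*(real a + real T)^2 + (6*real T*(real a - 1)^2 + 6*(real a - 1)*real T*(real T+1) + real T*(real T+1)*(2*real T+1))"
    by (simp only: Suc.IH)
  also have "\<dots> = 6*real (Suc T)*(real a - 1)^2 + 6*(real a - 1)*real (Suc T)*(real (Suc T)+1) + real (Suc T)*(real (Suc T)+1)*(2*real (Suc T)+1)"
    by (simp add: algebra_simps power2_eq_square)
  finally show ?case .
qed

lemma sum_4_closed:
  fixes a T :: nat
  shows "30*(\<Sum>k\<in>{a..<a+T}. (real k)^4) = 30*real T*(real a - 1)^4 + 60*(real a - 1)^3*real T*(real T+1)
     + 30*(real a - 1)^2*real T*(real T+1)*(2*real T+1) + 30*(real a - 1)*(real T)^2*(real T+1)^2
     + real T*(real T+1)*(2*real T+1)*(3*(real T)^2+3*real T-1)"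
proof (induction T)
  case 0 then show ?case by simp
next
  case (Suc T)
  have "{a..<a+Suc T} = insert (a+T) {a..<a+T}" by auto
  then have "30*(\<Sum>k\<in>{a..<a+Suc T}. (real k)^4) = 30*(real a + real T)^4 + 30*(\<Sum>k\<in>{a..<a+T}. (real k)^4)" by simp
  also have "\<dots> = 30*(real a + real T)^4 + (30*real T*(real a - 1)^4 + 60*(real a - 1)^3*real T*(real T+1)
     + 30*(real a - 1)^2*real T*(real T+1)*(2*real T+1) + 30*(real a - 1)*(real T)^2*(real T+1)^2
     + real T*(real T+1)*(2*real T+1)*(3*(real T)^2+3*real T-1))"
    by (simp only: Suc.IH)
  also have "\<dots> = 30*real (Suc T)*(real a - 1)^4 + 60*(real a - 1)^3*real (Suc T)*(real (Suc T)+1)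
     + 30*(real a - 1)^2*real (Suc T)*(real (Suc T)+1)*(2*real (Suc T)+1) + 30*(real a - 1)*(real (Suc T))^2*(real (Suc T)+1)^2
     + real (Suc T)*(real (Suc T)+1)*(2*real (Suc T)+1)*(3*(real (Suc T))^2+3*real (Suc T)-1)"
    by (simp add: algebra_simps power2_eq_square power3_eq_cube power4_eq_xxxx)
  finally show ?case .
qed

lemma poly_R:
  fixes c T :: real assumes "0 \<le> c" "0 \<le> T"
  shows "2*T*(c+T)^2 \<le> 6*T*c^2 + 6*c*T*(T+1) + T*(T+1)*(2*T+1)"
proof -
  have "6*T*c^2 + 6*c*T*(T+1) + T*(T+1)*(2*T+1) - 2*T*(c+T)^2 = 4*T*c^2 + 2*c*T^2 + 6*c*T + 3*T^2 + T"
    by (simp add: algebra_simps power2_eq_square power3_eq_cube)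
  moreover have "0 \<le> 4*T*c^2 + 2*c*T^2 + 6*c*T + 3*T^2 + T" using assms by simp
  ultimately show ?thesis by linarith
qed

lemma poly_P:
  fixes c T :: real assumes c: "0 \<le> c" and T: "0 \<le> T"
  shows "2*T*(30*T*c^4 + 60*c^3*T*(T+1) + 30*c^2*T*(T+1)*(2*T+1) + 30*c*T^2*(T+1)^2 + T*(T+1)*(2*T+1)*(3*T^2+3*T-1))
     \<le> 3*(6*T*c^2 + 6*c*T*(T+1) + T*(T+1)*(2*T+1))^2"
proof -
  have "3*(6*T*c^2 + 6*c*T*(T+1) + T*(T+1)*(2*T+1))^2 - 2*T*(30*T*c^4 + 60*c^3*T*(T+1) + 30*c^2*T*(T+1)*(2*T+1) + 30*c*T^2*(T+1)^2 + T*(T+1)*(2*T+1)*(3*T^2+3*T-1))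
     = 5*T^2 + 18*T^3 + 19*T^4 + 6*T^5 + c*(36*T^2 + 84*T^3 + 60*T^4 + 12*T^5)
       + c^2*(84*T^2 + 144*T^3 + 60*T^4) + c^3*(96*T^2 + 96*T^3) + 48*c^4*T^2"
    by (simp add: algebra_simps power2_eq_square power3_eq_cube power4_eq_xxxx eval_nat_numeral)
  moreover have "0 \<le> 5*T^2 + 18*T^3 + 19*T^4 + 6*T^5 + c*(36*T^2 + 84*T^3 + 60*T^4 + 12*T^5)
       + c^2*(84*T^2 + 144*T^3 + 60*T^4) + c^3*(96*T^2 + 96*T^3) + 48*c^4*T^2"
    using c T by simp
  ultimately show ?thesis by linarith
qed

lemma prob_noise: "prob_space noise"
  unfolding noise_def by (rule prob_space_PiM) (rule prob_NN)

lemma chernoff_generic: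
  fixes W :: "(nat \<times> bool) set" and t m :: "nat \<times> bool \<Rightarrow> real" and e c :: real
  assumes W: "finite W" and t: "\<And>i. i \<in> W \<Longrightarrow> 0 < 1 - 2 * t i * e^2"
  shows "measure noise {\<omega> \<in> space noise. c \<le> (\<Sum>i\<in>W. t i * (m i + e * \<omega> i)^2)}
    \<le> exp (-c) * (\<Prod>i\<in>W. exp (t i * (m i)^2/(1 - 2*t i*e^2)) / sqrt (1 - 2*t i*e^2))"
proof -
  interpret prob_space noise by (rule prob_noise)
  define G where "G \<omega> = (\<Sum>i\<in>W. t i * (m i + e * \<omega> i)^2)" for \<omega> :: "nat \<times> bool \<Rightarrow> real"
  define A where "A = {\<omega> \<in> space noise. c \<le> G \<omega>}"
  have Gm: "G \<in> borel_measurable noise"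
    unfolding G_def noise_def by measurable
  have Am: "A \<in> sets noise" unfolding A_def using Gm by measurable
  have gm: "(\<lambda>x. ennreal (exp (t i * (m i + e * x)^2))) \<in> borel_measurable borel" for i
    by measurable
  have Pm: "(\<lambda>\<omega>. \<Prod>i\<in>W. ennreal (exp (t i * (m i + e * \<omega> i)^2))) \<in> borel_measurable noise"
    unfolding noise_def by measurable
  have "emeasure noise A = (\<integral>\<^sup>+\<omega>. indicator A \<omega> \<partial>noise)"
    using Am by simp
  also have "\<dots> \<le> (\<integral>\<^sup>+\<omega>. ennreal (exp (G \<omega> - c)) \<partial>noise)"
    by (intro nn_integral_mono) (auto simp: A_def indicator_def)
  also have "\<dots> = (\<integral>\<^sup>+\<omega>. ennreal (exp (-c)) * (\<Prod>i\<in>W. ennreal (exp (t i * (m i + e * \<omega> i)^2))) \<partial>noise)"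
  proof (intro nn_integral_cong)
    fix \<omega> :: "nat \<times> bool \<Rightarrow> real"
    have "exp (G \<omega> - c) = exp (-c) * (\<Prod>i\<in>W. exp (t i * (m i + e * \<omega> i)^2))"
      unfolding G_def using W by (simp add: exp_sum exp_diff exp_minus field_simps)
    then show "ennreal (exp (G \<omega> - c)) = ennreal (exp (-c)) * (\<Prod>i\<in>W. ennreal (exp (t i * (m i + e * \<omega> i)^2)))"
      by (simp add: prod_ennreal ennreal_mult prod_nonneg)
  qed
  also have "\<dots> = ennreal (exp (-c)) * (\<integral>\<^sup>+\<omega>. (\<Prod>i\<in>W. ennreal (exp (t i * (m i + e * \<omega> i)^2))) \<partial>noise)"
    by (rule nn_integral_cmult[OF Pm])
  also have "(\<integral>\<^sup>+\<omega>. (\<Prod>i\<in>W. ennreal (exp (t i * (m i + e * \<omega> i)^2))) \<partial>noise)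
      = (\<Prod>i\<in>W. \<integral>\<^sup>+x. ennreal (exp (t i * (m i + e * x)^2)) \<partial>NN)"
    by (rule noise_prod_integral[OF W gm])
  also have "\<dots> = (\<Prod>i\<in>W. ennreal (exp (t i * (m i)^2/(1 - 2*t i*e^2)) / sqrt (1 - 2*t i*e^2)))"
    by (intro prod.cong refl gauss_mgf t)
  also have "\<dots> = ennreal (\<Prod>i\<in>W. exp (t i * (m i)^2/(1 - 2*t i*e^2)) / sqrt (1 - 2*t i*e^2))"
    by (rule prod_ennreal) (use t in force)
  finally have fin: "emeasure noise A \<le> ennreal (exp (-c)) * ennreal (\<Prod>i\<in>W. exp (t i * (m i)^2/(1 - 2*t i*e^2)) / sqrt (1 - 2*t i*e^2))" .
  have P0: "0 \<le> (\<Prod>i\<in>W. exp (t i * (m i)^2/(1 - 2*t i*e^2)) / sqrt (1 - 2*t i*e^2))"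
    by (intro prod_nonneg) (use t in force)
  have "emeasure noise A \<le> ennreal (exp (-c) * (\<Prod>i\<in>W. exp (t i * (m i)^2/(1 - 2*t i*e^2)) / sqrt (1 - 2*t i*e^2)))"
    using fin P0 by (simp add: ennreal_mult)
  then show ?thesis
    unfolding A_def G_def emeasure_eq_measure
    using P0 by (simp add: ennreal_le_iff)
qed

lemma factor_up:
  fixes x E \<phi> :: real
  assumes x0: "0 \<le> x" and x1: "x \<le> \<phi>/5" and p0: "0 < \<phi>" and p1: "\<phi> < 1" and E: "0 \<le> E"
  shows "exp (E/(1-2*x)) / sqrt (1-2*x) \<le> exp (E*(1+\<phi>) + (x + 13/9*x^2))"
proof -
  define K where "K = x + 13/9*x^2"
  have xa: "x < 1/2" using x1 p1 by simp
  have pos: "0 < 1-2*x" using xa by simp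
  have "(8/3)*x^3/(1-2*x) \<le> (8/9)*x^2"
  proof -
    have "x/(1-2*x) \<le> 1/3" using pos x1 p1 by (simp add: divide_simps)
    then have "(8/3)*x^2*(x/(1-2*x)) \<le> (8/3)*x^2*(1/3)"
      by (intro mult_left_mono) auto
    then show ?thesis by (simp add: power3_eq_cube power2_eq_square)
  qed
  then have "-2*K \<le> ln (1-2*x)" using ln_lower1[OF x0 xa] unfolding K_def by simp
  then have "exp (-2*K) \<le> 1-2*x" using pos by (simp add: ln_ge_iff)
  then have s1: "sqrt (exp (-2*K)) \<le> sqrt (1-2*x)" by (rule real_sqrt_le_mono)
  have eq:  "sqrt (exp (-2*K)) = exp (-K)"
  proof -
    have "exp (-2*K) = (exp (-K))^2" by (simp add: power2_eq_square exp_add[symmetric])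
    then show ?thesis by simp
  qed
  have s: "exp (-K) \<le> sqrt (1-2*x)" using s1 unfolding eq .
  have sp: "0 < sqrt (1-2*x)" using pos by simp
  have "1/sqrt (1-2*x) \<le> exp K"
  proof -
    have "1/sqrt (1-2*x) \<le> 1/exp (-K)" using s sp by (intro divide_left_mono) auto
    then show ?thesis by (simp add: exp_minus inverse_eq_divide)
  qed
  moreover have "E/(1-2*x) \<le> E*(1+\<phi>)"
  proof -
    have h1: "x*\<phi> \<le> x*1" using x0 p1 by (intro mult_left_mono) auto
    have "(1+\<phi>)*(1-2*x) = 1 + \<phi> - 2*x - 2*(x*\<phi>)" by (simp add: algebra_simps)
    then have "1 \<le> (1+\<phi>)*(1-2*x)" using h1 x1 p0 by linarith
    then have "1/(1-2*x) \<le> 1+\<phi>" using pos by (simp add: pos_divide_le_eq)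
    then have "E*(1/(1-2*x)) \<le> E*(1+\<phi>)" using E by (intro mult_left_mono) auto
    then show ?thesis by simp
  qed
  ultimately have "exp (E/(1-2*x)) * (1/sqrt (1-2*x)) \<le> exp (E*(1+\<phi>)) * exp K"
    using pos by (intro mult_mono) auto
  then show ?thesis unfolding K_def by (simp add: exp_add)
qed

lemma factor_low:
  fixes x E \<phi> :: real
  assumes x0: "0 \<le> x" and x1: "x \<le> \<phi>/5" and p0: "0 < \<phi>" and p1: "\<phi> < 1" and E: "0 \<le> E"
  shows "exp (-E/(1+2*x)) / sqrt (1+2*x) \<le> exp (-E*(1-2*\<phi>/5) + (-x + x^2))"
proof -
  define K where "K = x - x^2"
  have pos: "0 < 1+2*x" using x0 by simp
  have "2*K \<le> ln (1+2*x)" using ln_lower2[OF x0] unfolding K_def by simp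
  then have "exp (2*K) \<le> 1+2*x" using pos by (simp add: ln_ge_iff)
  then have s1: "sqrt (exp (2*K)) \<le> sqrt (1+2*x)" by (rule real_sqrt_le_mono)
  have eq:  "sqrt (exp (2*K)) = exp K"
  proof -
    have "exp (2*K) = (exp K)^2" by (simp add: power2_eq_square exp_add[symmetric])
    then show ?thesis by simp
  qed
  have s: "exp K \<le> sqrt (1+2*x)" using s1 unfolding eq .
  have sp: "0 < sqrt (1+2*x)" using pos by simp
  have "1/sqrt (1+2*x) \<le> exp (-K)"
  proof -
    have "1/sqrt (1+2*x) \<le> 1/exp K" using s sp by (intro divide_left_mono) auto
    then show ?thesis by (simp add: exp_minus inverse_eq_divide)
  qed
  moreover have "-E/(1+2*x) \<le> -E*(1-2*\<phi>/5)"
  proof -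
    have h1: "0 \<le> x*\<phi>" using x0 p0 by simp
    have "(1-2*\<phi>/5)*(1+2*x) = 1 + 2*x - 2*\<phi>/5 - 4*(x*\<phi>)/5" by (simp add: algebra_simps)
    then have "(1-2*\<phi>/5)*(1+2*x) \<le> 1" using h1 x1 by linarith
    then have "1-2*\<phi>/5 \<le> 1/(1+2*x)" using pos by (simp add: pos_le_divide_eq)
    then have "E*(1-2*\<phi>/5) \<le> E*(1/(1+2*x))" using E by (intro mult_left_mono) auto
    then show ?thesis by simp
  qed
  ultimately have "exp (-E/(1+2*x)) * (1/sqrt (1+2*x)) \<le> exp (-E*(1-2*\<phi>/5)) * exp (-K)"
    using pos by (intro mult_mono) auto
  moreover have "exp (-E*(1-2*\<phi>/5)) * exp (-K) = exp (-E*(1-2*\<phi>/5) + (-x + x^2))"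
    unfolding K_def by (simp add: exp_add[symmetric])
  ultimately show ?thesis by simp
qed

lemma upper_tail:
  fixes W :: "(nat \<times> bool) set" and w m :: "nat \<times> bool \<Rightarrow> real" and e l \<phi> :: real
  assumes W: "finite W" and w: "\<And>i. i \<in> W \<Longrightarrow> 0 \<le> w i" and l: "0 < l"
    and p0: "0 < \<phi>" and p1: "\<phi> < 1" and xb: "\<And>i. i \<in> W \<Longrightarrow> l*e^2*w i \<le> \<phi>/5"
  shows "measure noise {\<omega> \<in> space noise. (\<Sum>i\<in>W. w i * (m i)^2) + e^2*(\<Sum>i\<in>W. w i)
            + \<phi>*((\<Sum>i\<in>W. w i * (m i)^2) + e^2*(\<Sum>i\<in>W. w i)/2) < (\<Sum>i\<in>W. w i * (m i + e * \<omega> i)^2)}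
     \<le> exp (-l*\<phi>*(e^2*(\<Sum>i\<in>W. w i))/2 + 13/9*(\<Sum>i\<in>W. (l*e^2*w i)^2))"
proof -
  interpret prob_space noise by (rule prob_noise)
  define D where "D = (\<Sum>i\<in>W. w i * (m i)^2)"
  define s2 where "s2 = e^2*(\<Sum>i\<in>W. w i)"
  define cu where "cu = D + s2 + \<phi>*(D + s2/2)"
  define x where "x i = l*e^2*w i" for i
  define E where "E i = l*w i*(m i)^2" for i
  have x0: "0 \<le> x i" if "i \<in> W" for i using w[OF that] l unfolding x_def by simp
  have x1: "x i \<le> \<phi>/5" if "i \<in> W" for i using xb[OF that] unfolding x_def by simp
  have E0: "0 \<le> E i" if "i \<in> W" for i using w[OF that] l unfolding E_def by simp
  have sub: "{\<omega> \<in> space noise. cu < (\<Sum>i\<in>W. w i * (m i + e * \<omega> i)^2)}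
      \<subseteq> {\<omega> \<in> space noise. l*cu \<le> (\<Sum>i\<in>W. (l*w i) * (m i + e * \<omega> i)^2)}"
  proof safe
    fix \<omega> assume "cu < (\<Sum>i\<in>W. w i * (m i + e * \<omega> i)^2)"
    then have "l*cu \<le> l*(\<Sum>i\<in>W. w i * (m i + e * \<omega> i)^2)" using l by simp
    then show "l*cu \<le> (\<Sum>i\<in>W. (l*w i) * (m i + e * \<omega> i)^2)"
      by (simp add: sum_distrib_left mult.assoc)
  qed
  have meas: "{\<omega> \<in> space noise. l*cu \<le> (\<Sum>i\<in>W. (l*w i) * (m i + e * \<omega> i)^2)} \<in> sets noise"
    unfolding noise_def by measurable
  have "measure noise {\<omega> \<in> space noise. cu < (\<Sum>i\<in>W. w i * (m i + e * \<omega> i)^2)}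
      \<le> measure noise {\<omega> \<in> space noise. l*cu \<le> (\<Sum>i\<in>W. (l*w i) * (m i + e * \<omega> i)^2)}"
    by (rule finite_measure_mono[OF sub meas])
  also have "\<dots> \<le> exp (-(l*cu)) * (\<Prod>i\<in>W. exp ((l*w i) * (m i)^2/(1 - 2*(l*w i)*e^2)) / sqrt (1 - 2*(l*w i)*e^2))"
  proof (rule chernoff_generic[OF W])
    fix i assume i: "i \<in> W"
    have "2*(l*w i)*e^2 = 2*x i" unfolding x_def by simp
    then show "0 < 1 - 2*(l*w i)*e^2" using x1[OF i] p1 by simp
  qed
  also have "\<dots> = exp (-(l*cu)) * (\<Prod>i\<in>W. exp (E i/(1 - 2*x i)) / sqrt (1 - 2*x i))"
    unfolding E_def x_def by (simp add: mult.commute mult.left_commute)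
  also have "\<dots> \<le> exp (-(l*cu)) * (\<Prod>i\<in>W. exp (E i*(1+\<phi>) + (x i + 13/9*(x i)^2)))"
  proof (intro mult_left_mono prod_mono conjI)
    fix i assume i: "i \<in> W"
    have "x i < 1/2" using x1[OF i] p1 by simp
    then show "0 \<le> exp (E i/(1 - 2*x i)) / sqrt (1 - 2*x i)" by simp
    show "exp (E i/(1 - 2*x i)) / sqrt (1 - 2*x i) \<le> exp (E i*(1+\<phi>) + (x i + 13/9*(x i)^2))"
      by (rule factor_up[OF x0[OF i] x1[OF i] p0 p1 E0[OF i]])
  qed simp
  also have "\<dots> = exp (-(l*cu) + (\<Sum>i\<in>W. E i*(1+\<phi>) + (x i + 13/9*(x i)^2)))"
    by (subst exp_add) (simp only: exp_sum[OF W])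
  also have "-(l*cu) + (\<Sum>i\<in>W. E i*(1+\<phi>) + (x i + 13/9*(x i)^2)) = -l*\<phi>* s2/2 + 13/9*(\<Sum>i\<in>W. (x i)^2)"
  proof -
    have sE: "(\<Sum>i\<in>W. E i) = l*D" unfolding E_def D_def by (simp add: sum_distrib_left mult.assoc)
    have sx: "(\<Sum>i\<in>W. x i) = l* s2" unfolding x_def s2_def by (simp add: sum_distrib_left mult.assoc)
    have "(\<Sum>i\<in>W. E i*(1+\<phi>) + (x i + 13/9*(x i)^2)) = (\<Sum>i\<in>W. E i)*(1+\<phi>) + (\<Sum>i\<in>W. x i) + 13/9*(\<Sum>i\<in>W. (x i)^2)"
      by (simp add: sum.distrib sum_distrib_left sum_distrib_right)
    then show ?thesis unfolding sE sx cu_def by (simp add: algebra_simps)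
  qed
  finally show ?thesis unfolding cu_def D_def s2_def x_def by simp
qed

lemma lower_tail:
  fixes W :: "(nat \<times> bool) set" and w m :: "nat \<times> bool \<Rightarrow> real" and e l \<phi> :: real
  assumes W: "finite W" and w: "\<And>i. i \<in> W \<Longrightarrow> 0 \<le> w i" and l: "0 < l"
    and p0: "0 < \<phi>" and p1: "\<phi> < 1" and xb: "\<And>i. i \<in> W \<Longrightarrow> l*e^2*w i \<le> \<phi>/5"
  shows "measure noise {\<omega> \<in> space noise. (\<Sum>i\<in>W. w i * (m i + e * \<omega> i)^2) < (\<Sum>i\<in>W. w i * (m i)^2) + e^2*(\<Sum>i\<in>W. w i)
            - \<phi>*((\<Sum>i\<in>W. w i * (m i)^2) + e^2*(\<Sum>i\<in>W. w i)/2)}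
     \<le> exp (-l*\<phi>*(e^2*(\<Sum>i\<in>W. w i))/2 + (\<Sum>i\<in>W. (l*e^2*w i)^2))"
proof -
  interpret prob_space noise by (rule prob_noise)
  define D where "D = (\<Sum>i\<in>W. w i * (m i)^2)"
  define s2 where "s2 = e^2*(\<Sum>i\<in>W. w i)"
  define cl where "cl = D + s2 - \<phi>*(D + s2/2)"
  define x where "x i = l*e^2*w i" for i
  define E where "E i = l*w i*(m i)^2" for i
  have x0: "0 \<le> x i" if "i \<in> W" for i using w[OF that] l unfolding x_def by simp
  have x1: "x i \<le> \<phi>/5" if "i \<in> W" for i using xb[OF that] unfolding x_def by simp
  have E0: "0 \<le> E i" if "i \<in> W" for i using w[OF that] l unfolding E_def by simp
  have sub: "{\<omega> \<in> space noise. (\<Sum>i\<in>W. w i * (m i + e * \<omega> i)^2) < cl}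
      \<subseteq> {\<omega> \<in> space noise. -(l*cl) \<le> (\<Sum>i\<in>W. (-(l*w i)) * (m i + e * \<omega> i)^2)}"
  proof safe
    fix \<omega> assume "(\<Sum>i\<in>W. w i * (m i + e * \<omega> i)^2) < cl"
    then have "-(l*cl) \<le> -(l*(\<Sum>i\<in>W. w i * (m i + e * \<omega> i)^2))" using l by simp
    then show "-(l*cl) \<le> (\<Sum>i\<in>W. (-(l*w i)) * (m i + e * \<omega> i)^2)"
      by (simp add: sum_distrib_left mult.assoc sum_negf)
  qed
  have meas: "{\<omega> \<in> space noise. -(l*cl) \<le> (\<Sum>i\<in>W. (-(l*w i)) * (m i + e * \<omega> i)^2)} \<in> sets noise"
    unfolding noise_def by measurable
  have "measure noise {\<omega> \<in> space noise. (\<Sum>i\<in>W. w i * (m i + e * \<omega> i)^2) < cl}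
      \<le> measure noise {\<omega> \<in> space noise. -(l*cl) \<le> (\<Sum>i\<in>W. (-(l*w i)) * (m i + e * \<omega> i)^2)}"
    by (rule finite_measure_mono[OF sub meas])
  also have "\<dots> \<le> exp (-(-(l*cl))) * (\<Prod>i\<in>W. exp ((-(l*w i)) * (m i)^2/(1 - 2*(-(l*w i))*e^2)) / sqrt (1 - 2*(-(l*w i))*e^2))"
  proof (rule chernoff_generic[OF W])
    fix i assume i: "i \<in> W"
    have "2*(-(l*w i))*e^2 = -(2*x i)" unfolding x_def by simp
    then show "0 < 1 - 2*(-(l*w i))*e^2" using x0[OF i] by simp
  qed
  also have "\<dots> = exp (l*cl) * (\<Prod>i\<in>W. exp (-E i/(1 + 2*x i)) / sqrt (1 + 2*x i))"
    unfolding E_def x_def by (simp add: mult.commute mult.left_commute)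
  also have "\<dots> \<le> exp (l*cl) * (\<Prod>i\<in>W. exp (-E i*(1-2*\<phi>/5) + (-x i + (x i)^2)))"
  proof (intro mult_left_mono prod_mono conjI)
    fix i assume i: "i \<in> W"
    show "0 \<le> exp (-E i/(1 + 2*x i)) / sqrt (1 + 2*x i)" using x0[OF i] by simp
    show "exp (-E i/(1 + 2*x i)) / sqrt (1 + 2*x i) \<le> exp (-E i*(1-2*\<phi>/5) + (-x i + (x i)^2))"
      by (rule factor_low[OF x0[OF i] x1[OF i] p0 p1 E0[OF i]])
  qed simp
  also have "\<dots> = exp (l*cl + (\<Sum>i\<in>W. -E i*(1-2*\<phi>/5) + (-x i + (x i)^2)))"
    by (subst exp_add) (simp only: exp_sum[OF W])
  also have "\<dots> \<le> exp (-l*\<phi>* s2/2 + (\<Sum>i\<in>W. (x i)^2))"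
  proof -
    have sE: "(\<Sum>i\<in>W. E i) = l*D" unfolding E_def D_def by (simp add: sum_distrib_left mult.assoc)
    have sx: "(\<Sum>i\<in>W. x i) = l* s2" unfolding x_def s2_def by (simp add: sum_distrib_left mult.assoc)
    have D0: "0 \<le> D" unfolding D_def using w by (intro sum_nonneg) simp
    have "(\<Sum>i\<in>W. -E i*(1-2*\<phi>/5) + (-x i + (x i)^2)) = -(\<Sum>i\<in>W. E i)*(1-2*\<phi>/5) - (\<Sum>i\<in>W. x i) + (\<Sum>i\<in>W. (x i)^2)"
      by (simp add: sum_subtractf sum_distrib_right)
    then have "l*cl + (\<Sum>i\<in>W. -E i*(1-2*\<phi>/5) + (-x i + (x i)^2)) = -l*\<phi>* s2/2 + (\<Sum>i\<in>W. (x i)^2) - 3/5*\<phi>*(l*D)"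
      unfolding sE sx cl_def by (simp add: algebra_simps)
    moreover have "0 \<le> 3/5*\<phi>*(l*D)" using p0 l D0 by simp
    ultimately show ?thesis by simp
  qed
  finally show ?thesis unfolding cl_def D_def s2_def x_def by simp
qed

lemma block_weights:
  fixes a T :: nat assumes a: "1 \<le> a"
  shows "\<And>k. k \<in> {a..<a+T} \<Longrightarrow> real T * (2*pi*real k)^2 \<le> 3*(\<Sum>k\<in>{a..<a+T}. (2*pi*real k)^2)"
    and "real T * (\<Sum>k\<in>{a..<a+T}. ((2*pi*real k)^2)^2) \<le> 9/5*(\<Sum>k\<in>{a..<a+T}. (2*pi*real k)^2)^2"
proof -
  define A where "A = (\<Sum>k\<in>{a..<a+T}. (real k)^2)"
  define B where "B = (\<Sum>k\<in>{a..<a+T}. (real k)^4)"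
  define c where "c = real a - 1"
  have c0: "0 \<le> c" using a unfolding c_def by simp
  have hA: "6*A = 6*real T*c^2 + 6*c*real T*(real T+1) + real T*(real T+1)*(2*real T+1)"
    unfolding A_def c_def by (rule sum_sq_closed)
  have hB: "30*B = 30*real T*c^4 + 60*c^3*real T*(real T+1)
     + 30*c^2*real T*(real T+1)*(2*real T+1) + 30*c*(real T)^2*(real T+1)^2
     + real T*(real T+1)*(2*real T+1)*(3*(real T)^2+3*real T-1)"
    unfolding B_def c_def by (rule sum_4_closed)
  have S: "(\<Sum>k\<in>{a..<a+T}. (2*pi*real k)^2) = 4*pi^2*A"
    unfolding A_def by (simp add: sum_distrib_left power_mult_distrib)
  have S2: "(\<Sum>k\<in>{a..<a+T}. ((2*pi*real k)^2)^2) = 16*pi^4*B"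
    unfolding B_def by (simp add: sum_distrib_left power_mult_distrib flip: power_mult)
  have R: "2*real T*(c+real T)^2 \<le> 6*A" unfolding hA by (rule poly_R[OF c0]) simp
  have P: "2*real T*(30*B) \<le> 3*(6*A)^2" unfolding hA hB
    by (rule order_trans[OF _ poly_P[OF c0, of "real T"]]) (simp_all add: algebra_simps)
  show "real T * (2*pi*real k)^2 \<le> 3*(\<Sum>k\<in>{a..<a+T}. (2*pi*real k)^2)" if k: "k \<in> {a..<a+T}" for k
  proof -
    have "real k \<le> c + real T" using k a unfolding c_def by auto
    then have "(real k)^2 \<le> (c + real T)^2" by (intro power_mono) auto
    then have "real T * (real k)^2 \<le> real T * (c + real T)^2" by (intro mult_left_mono) auto
    then have "real T * (real k)^2 \<le> 3*A" using R by linarith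
    then have "4*pi^2*(real T * (real k)^2) \<le> 4*pi^2*(3*A)" by (intro mult_left_mono) auto
    then show ?thesis unfolding S by (simp add: power_mult_distrib algebra_simps)
  qed
  show "real T * (\<Sum>k\<in>{a..<a+T}. ((2*pi*real k)^2)^2) \<le> 9/5*(\<Sum>k\<in>{a..<a+T}. (2*pi*real k)^2)^2"
  proof -
    have "real T * B \<le> 9/5*A^2" using P by (simp add: power2_eq_square algebra_simps)
    then have "16*pi^4*(real T * B) \<le> 16*pi^4*(9/5*A^2)" by (intro mult_left_mono) auto
    then show ?thesis unfolding S S2 by (simp add: power_mult_distrib algebra_simps power2_eq_square power4_eq_xxxx)
  qed
qed

lemma stein_det:
  fixes D s Y \<phi> :: real
  assumes s: "0 < s" and D: "0 \<le> D" and p0: "0 < \<phi>" and p1: "\<phi> < 1"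
    and lo: "D + 2* s - \<phi>*(D+s) \<le> Y" and hi: "Y \<le> D + 2* s + \<phi>*(D+s)"
  shows "max 0 (1 - s*(1+\<phi>)/(max 0 (Y - 2* s) + s)) \<in> {D/(D+s) - 2*(1 - D/(D+s))*\<phi>/(1-\<phi>) .. D/(D+s)}"
proof -
  define Z where "Z = max 0 (Y - 2* s)"
  have Ds: "0 < D + s" using s D by simp
  have Z0: "0 \<le> Z" unfolding Z_def by simp
  have Zhi: "Z \<le> D + \<phi>*(D+s)" unfolding Z_def using hi D p0 Ds by auto
  have Zlo: "(D+s)*(1-\<phi>) \<le> Z + s" unfolding Z_def using lo by (auto simp: algebra_simps)
  have hs: "D/(D+s) = 1 - s/(D+s)" using Ds by (simp add: field_simps)
  have up: "1 - s*(1+\<phi>)/(Z + s) \<le> D/(D+s)"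
  proof -
    have "Z + s \<le> (1+\<phi>)*(D+s)" using Zhi by (simp add: algebra_simps)
    then have "s*(1+\<phi>)/((1+\<phi>)*(D+s)) \<le> s*(1+\<phi>)/(Z + s)"
      using s p0 Z0 by (intro frac_le) auto
    moreover have "s*(1+\<phi>)/((1+\<phi>)*(D+s)) = s/(D+s)" using p0 by simp
    ultimately show ?thesis unfolding hs by simp
  qed
  have low: "D/(D+s) - 2*(1 - D/(D+s))*\<phi>/(1-\<phi>) \<le> 1 - s*(1+\<phi>)/(Z + s)"
  proof -
    have gen: "1 - q - 2*q*\<phi>/(1-\<phi>) = 1 - q*(1+\<phi>)/(1-\<phi>)" for q
      using p1 by (simp add: field_simps)
    have e1: "s*(1+\<phi>)/((D+s)*(1-\<phi>)) = (s/(D+s))*(1+\<phi>)/(1-\<phi>)" by simp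
    have e: "D/(D+s) - 2*(1 - D/(D+s))*\<phi>/(1-\<phi>) = 1 - s*(1+\<phi>)/((D+s)*(1-\<phi>))"
      unfolding e1 hs using gen[of "s/(D+s)"] by simp
    have "s*(1+\<phi>)/(Z + s) \<le> s*(1+\<phi>)/((D+s)*(1-\<phi>))"
      using s p0 p1 Ds Zlo by (intro frac_le) auto
    then show ?thesis unfolding e by simp
  qed
  have h0: "0 \<le> D/(D+s)" using D Ds by simp
  show ?thesis unfolding Z_def[symmetric] using up low h0 by auto
qed

theorem mainTheorem11:
  fixes f :: "real \<Rightarrow> real" and \<theta> \<epsilon> :: real
    and \<kappa> :: "nat \<Rightarrow> nat" and J N j k :: nat and \<phi> :: "nat \<Rightarrow> real"
  assumes f_meas: "f \<in> borel_measurable borel"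
    and f_L2loc: "\<And>a b. set_integrable lborel {a..b} (\<lambda>t. (f t)^2)"
    and f_even: "\<And>t. f (- t) = f t"
    and f_per: "\<And>t. f (t + 1) = f t"
    and eps: "0 < \<epsilon>" "\<epsilon> < 1"
    and J: "1 \<le> J"
    and kap1: "\<kappa> 1 = 1" and kapN: "\<kappa> (J + 1) = N + 1"
    and kap_mono: "\<And>i. 1 \<le> i \<Longrightarrow> i \<le> J \<Longrightarrow> \<kappa> i < \<kappa> (Suc i)"
    and j: "1 \<le> j" "j \<le> J"
    and phi_pos: "\<And>i. 0 < \<phi> i"
    and phi_lt: "\<phi> j < 1"
    and phi_T: "(\<phi> j)^2 * real (blen \<kappa> j) \<ge> 24 * ln (\<epsilon> powr (-5))"
    and k: "k \<in> block \<kappa> j"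
  shows "measure noise
     {\<omega> \<in> space noise.
        stein \<epsilon> (\<phi> j) \<kappa> j (obs_x (fcoef f) \<theta> \<epsilon> \<omega>) (obs_xs (fcoef f) \<theta> \<epsilon> \<omega>)
          \<in> {oracle_h (fcoef f) \<epsilon> \<kappa> j - 2 * (1 - oracle_h (fcoef f) \<epsilon> \<kappa> j) * \<phi> j / (1 - \<phi> j)
              .. oracle_h (fcoef f) \<epsilon> \<kappa> j}}
     \<ge> 1 - 2 * \<epsilon>^5"
proof -
  interpret prob_space noise by (rule prob_noise)
  define a where "a = \<kappa> j"
  define T where "T = blen \<kappa> j"
  define p where "p = \<phi> j"
  have p0: "0 < p" and p1: "p < 1" unfolding p_def using phi_pos phi_lt by auto
  have kj: "\<kappa> j < \<kappa> (Suc j)" using kap_mono j by simp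
  have kpos: "1 \<le> \<kappa> i" if "1 \<le> i" "i \<le> J" for i
    using that
  proof (induction i rule: nat_induct_at_least)
    case base then show ?case using kap1 by simp
  next
    case (Suc n)
    then have "1 \<le> \<kappa> n" by simp
    moreover have "\<kappa> n < \<kappa> (Suc n)" using kap_mono Suc by simp
    ultimately show ?case by simp
  qed
  have a1: "1 \<le> a" unfolding a_def using kpos j by simp
  have Bdef: "block \<kappa> j = {a..<a+T}" unfolding block_def a_def T_def blen_def using kj by simp
  define W where "W = block \<kappa> j \<times> (UNIV :: bool set)"
  have Wfin: "finite W" unfolding W_def block_def by simp
  define w where "w i = (2*pi*real (fst i))^2" for i :: "nat \<times> bool"
  define m where "m i = (if snd i then fcoef f (fst i) * cos (2*pi*real (fst i)*\<theta>)
     else fcoef f (fst i) * sin (2*pi*real (fst i)*\<theta>))" for i :: "nat \<times> bool"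
  define S where "S = sigma2 \<kappa> j"
  define D where "D = dnorm2 (fcoef f) \<kappa> j"
  define Y where "Y \<omega> = ynorm2 (obs_x (fcoef f) \<theta> \<epsilon> \<omega>) (obs_xs (fcoef f) \<theta> \<epsilon> \<omega>) \<kappa> j" for \<omega>
  have sumW: "(\<Sum>i\<in>W. g i) = (\<Sum>k\<in>block \<kappa> j. g (k,True) + g (k,False))" for g :: "nat \<times> bool \<Rightarrow> real"
  proof -
    have "(\<Sum>i\<in>W. g i) = (\<Sum>k\<in>block \<kappa> j. \<Sum>b\<in>UNIV. g (k,b))"
      unfolding W_def by (simp add: sum.cartesian_product)
    then show ?thesis by (simp add: UNIV_bool add.commute)
  qed
  have wpos: "0 \<le> w i" for i unfolding w_def by simp
  have sum_w: "(\<Sum>i\<in>W. w i) = 2*S"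
    unfolding sumW S_def sigma2_def w_def by (simp add: sum_distrib_left)
  have sum_D: "(\<Sum>i\<in>W. w i * (m i)^2) = D"
    unfolding sumW D_def dnorm2_def w_def m_def
  proof (intro sum.cong refl)
    fix k
    have "(fcoef f k * cos (2*pi*real k*\<theta>))^2 + (fcoef f k * sin (2*pi*real k*\<theta>))^2
        = (fcoef f k)^2 * ((sin (2*pi*real k*\<theta>))^2 + (cos (2*pi*real k*\<theta>))^2)"
      by (simp only: power_mult_distrib distrib_left add.commute)
    then have "(fcoef f k * cos (2*pi*real k*\<theta>))^2 + (fcoef f k * sin (2*pi*real k*\<theta>))^2 = (fcoef f k)^2"
      by (simp only: sin_cos_squared_add mult_1_right)
    then show "(2*pi*real (fst (k, True)))^2 * (if snd (k, True) then fcoef f (fst (k, True)) * cos (2*pi*real (fst (k, True))*\<theta>)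
                 else fcoef f (fst (k, True)) * sin (2*pi*real (fst (k, True))*\<theta>))^2 +
          (2*pi*real (fst (k, False)))^2 * (if snd (k, False) then fcoef f (fst (k, False)) * cos (2*pi*real (fst (k, False))*\<theta>)
                 else fcoef f (fst (k, False)) * sin (2*pi*real (fst (k, False))*\<theta>))^2
         = (2*pi*real k)^2 * (fcoef f k)^2"
      by (simp flip: distrib_left)
  qed
  have sum_Y: "(\<Sum>i\<in>W. w i * (m i + \<epsilon> * \<omega> i)^2) = Y \<omega>" for \<omega>
    unfolding sumW Y_def ynorm2_def w_def m_def obs_x_def obs_xs_def
    by (intro sum.cong refl) (simp add: distrib_left)

  have T1: "1 \<le> T" unfolding T_def blen_def using kj by simp
  have bw1: "real T * (2*pi*real k)^2 \<le> 3*S" if "k \<in> block \<kappa> j" for k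
    using block_weights(1)[OF a1, of k T] that unfolding Bdef S_def sigma2_def by simp
  have bw2: "real T * (\<Sum>k\<in>block \<kappa> j. ((2*pi*real k)^2)^2) \<le> 9/5*S^2"
    using block_weights(2)[OF a1, of T] unfolding Bdef S_def sigma2_def by simp
  have ka: "1 \<le> k" using k a1 unfolding Bdef by simp
  have S0: "0 < S"
  proof -
    have "0 < real T * (2*pi*real k)^2" using T1 ka by simp
    then show ?thesis using bw1[OF k] by simp
  qed
  have D0: "0 \<le> D" unfolding D_def dnorm2_def by (intro sum_nonneg) simp
  have e0: "\<epsilon> \<noteq> 0" using eps by simp
  define l where "l = p*T/(15*\<epsilon>^2*S)"
  have l0: "0 < l" unfolding l_def using p0 T1 S0 eps by simp
  have lx: "l*\<epsilon>^2 = p*T/(15*S)" unfolding l_def using e0 S0 by (simp add: field_simps)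
  have wposW: "\<And>i. i \<in> W \<Longrightarrow> 0 \<le> w i" using wpos by simp
  have xb: "l*\<epsilon>^2*w i \<le> p/5" if i: "i \<in> W" for i
  proof -
    have fi: "fst i \<in> block \<kappa> j" using i unfolding W_def by auto
    have "real T * w i \<le> 3*S" using bw1[OF fi] unfolding w_def by simp
    then have "p*(real T * w i) \<le> p*(3*S)" using p0 by (intro mult_left_mono) auto
    then have "p*(real T * w i)/(15*S) \<le> p*(3*S)/(15*S)" using S0 by (intro divide_right_mono) auto
    moreover have "p*(3*S)/(15*S) = p/5" using S0 by simp
    moreover have "l*\<epsilon>^2*w i = p*(real T * w i)/(15*S)" unfolding lx by simp
    ultimately show ?thesis by simp
  qed
  have Qb: "(\<Sum>i\<in>W. (l*\<epsilon>^2*w i)^2) \<le> 2/125*p^2*T"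
  proof -
    define Q where "Q = (\<Sum>k\<in>block \<kappa> j. ((2*pi*real k)^2)^2)"
    have "(\<Sum>i\<in>W. (l*\<epsilon>^2*w i)^2) = 2*(l*\<epsilon>^2)^2*Q"
      unfolding sumW Q_def w_def by (simp add: sum_distrib_left power_mult_distrib mult_ac)
    also have "\<dots> = 2*p^2*T/(225*S^2)*(T*Q)" unfolding lx using S0
      by (simp add: power_divide power_mult_distrib power2_eq_square)
    also have "\<dots> \<le> 2*p^2*T/(225*S^2)*(9/5*S^2)"
      using bw2 unfolding Q_def by (intro mult_left_mono) auto
    also have "\<dots> = 2/125*p^2*T" using S0 by simp
    finally show ?thesis .
  qed
  have expo: "-l*p*(\<epsilon>^2*(2*S))/2 = -(p^2)*T/15"
  proof -
    have "-l*p*(\<epsilon>^2*(2*S))/2 = -(l*\<epsilon>^2)*p*S" by (simp add: algebra_simps)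
    also have "\<dots> = -(p^2)*T/15" unfolding lx using S0 by (simp add: power2_eq_square)
    finally show ?thesis .
  qed
  have fin: "exp (-(p^2)*T/24) \<le> \<epsilon>^5"
  proof -
    have "24 * (-5 * ln \<epsilon>) \<le> p^2*T" using phi_T unfolding p_def T_def by simp
    then have "-(p^2)*T/24 \<le> 5 * ln \<epsilon>" by simp
    then have "exp (-(p^2)*T/24) \<le> exp (5 * ln \<epsilon>)" by simp
    also have "exp (5 * ln \<epsilon>) = \<epsilon>^5"
    proof -
      have "exp (5 * ln \<epsilon>) = \<epsilon> powr 5" using eps by (simp add: powr_def)
      then show ?thesis using eps by simp
    qed
    finally show ?thesis .
  qed
  have X0: "0 \<le> p^2*real T" by simp
  define cu where "cu = D + \<epsilon>^2*(2*S) + p*(D + \<epsilon>^2*(2*S)/2)"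
  define cl where "cl = D + \<epsilon>^2*(2*S) - p*(D + \<epsilon>^2*(2*S)/2)"
  define U where "U = {\<omega> \<in> space noise. cu < Y \<omega>}"
  define L where "L = {\<omega> \<in> space noise. Y \<omega> < cl}"
  have mU: "measure noise U \<le> \<epsilon>^5"
  proof -
    have "measure noise U \<le> exp (-l*p*(\<epsilon>^2*(2*S))/2 + 13/9*(\<Sum>i\<in>W. (l*\<epsilon>^2*w i)^2))"
      using upper_tail[where W=W and w=w and m=m and e=\<epsilon> and l=l and \<phi>=p, OF Wfin wposW l0 p0 p1 xb]
      unfolding sum_D sum_w sum_Y U_def cu_def by simp
    also have "\<dots> \<le> exp (-(p^2)*T/24)"
      unfolding expo exp_le_cancel_iff using Qb X0 by linarith
    finally show ?thesis using fin by simp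
  qed
  have mL: "measure noise L \<le> \<epsilon>^5"
  proof -
    have "measure noise L \<le> exp (-l*p*(\<epsilon>^2*(2*S))/2 + (\<Sum>i\<in>W. (l*\<epsilon>^2*w i)^2))"
      using lower_tail[where W=W and w=w and m=m and e=\<epsilon> and l=l and \<phi>=p, OF Wfin wposW l0 p0 p1 xb]
      unfolding sum_D sum_w sum_Y L_def cl_def by simp
    also have "\<dots> \<le> exp (-(p^2)*T/24)"
      unfolding expo exp_le_cancel_iff using Qb X0 by linarith
    finally show ?thesis using fin by simp
  qed
  have Um: "U \<in> sets noise"
    unfolding U_def Y_def ynorm2_def obs_x_def obs_xs_def noise_def by measurable
  have Lm: "L \<in> sets noise"
    unfolding L_def Y_def ynorm2_def obs_x_def obs_xs_def noise_def by measurable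
  define G where "G = {\<omega> \<in> space noise.
        stein \<epsilon> (\<phi> j) \<kappa> j (obs_x (fcoef f) \<theta> \<epsilon> \<omega>) (obs_xs (fcoef f) \<theta> \<epsilon> \<omega>)
          \<in> {oracle_h (fcoef f) \<epsilon> \<kappa> j - 2 * (1 - oracle_h (fcoef f) \<epsilon> \<kappa> j) * \<phi> j / (1 - \<phi> j)
              .. oracle_h (fcoef f) \<epsilon> \<kappa> j}}"
  have Gm: "G \<in> sets noise"
    unfolding G_def stein_def ynorm2_def obs_x_def obs_xs_def noise_def by measurable
  have sub: "space noise - (U \<union> L) \<subseteq> G"
  proof
    fix \<omega> assume \<omega>: "\<omega> \<in> space noise - (U \<union> L)"
    then have hi: "Y \<omega> \<le> cu" and lo: "cl \<le> Y \<omega>" unfolding U_def L_def by auto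
    have s0: "0 < \<epsilon>^2*S" using S0 eps by simp
    have "max 0 (1 - (\<epsilon>^2*S)*(1+p)/(max 0 (Y \<omega> - 2*(\<epsilon>^2*S)) + \<epsilon>^2*S))
       \<in> {D/(D+\<epsilon>^2*S) - 2*(1 - D/(D+\<epsilon>^2*S))*p/(1-p) .. D/(D+\<epsilon>^2*S)}"
      by (rule stein_det[OF s0 D0 p0 p1]) (use hi lo in \<open>simp_all add: cu_def cl_def algebra_simps\<close>)
    then show "\<omega> \<in> G" using \<omega> unfolding G_def stein_def oracle_h_def
      by (simp add: Y_def S_def D_def p_def mult.assoc)
  qed
  have "1 - 2*\<epsilon>^5 \<le> 1 - (measure noise U + measure noise L)" using mU mL by simp
  also have "\<dots> \<le> 1 - measure noise (U \<union> L)" using measure_Un_le[OF Um Lm] by simp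
  also have "\<dots> = measure noise (space noise - (U \<union> L))" using prob_compl[of "U \<union> L"] Um Lm by simp
  also have "\<dots> \<le> measure noise G" by (rule finite_measure_mono[OF sub Gm])
  finally show ?thesis unfolding G_def .
qed

end
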